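(* Let $G$ be a graph and $k\in\mathbb N$. Every principal tangle of order $k$ in $G$ is a robust principal $k$-profile.
   Context: A separation of $G$ is an ordered pair $(A,B)$ of subsets of $V(G)$ with $A\cup B=V(G)$ and no edge between $A\setminus B$ and $B\setminus A$; its order is $|A\cap B|$. $(A,B)\le(C,D)$ means $A\subseteq C$, $D\subseteq B$. A principal tangle of order $k$ is a set $\theta$ of separations of order at most $k-1$ such that: ($\theta$1) for all $(A_1,B_1),(A_2,B_2),(A_3,B_3)\in\theta$, $G\neq G[A_1]\cup G[A_2]\cup G[A_3]$; ($\theta$2) for every set $X$ of fewer than $k$ vertices there is a component $C$ of $G-X$ with $(V(G)\setminus C,C\cup X)\in\theta$; ($\theta$3) for every separation $(A,B)$ of order at most $k-1$, $(A,B)\in\theta$ or $(B,A)\in\theta$. A profile is a set $P$ of separations with (P1) if $(C,D)\le(A,B)\in P$ then $(D,C)\notin P$, and (P2) if $(A,B),(C,D)\in P$ then $(B\cap D,A\cup C)\notin P$. $P$ is principal if for every family $((A_i,B_i))_{i\in I}$ in $P$ with all $A_i\cap B_i$ equal, $\bigcap_i(B_i\setminus A_i)\neq\emptyset$; a $k$-profile if all its separations have order $<k$ and for each separation $(A,B)$ of order $<k$, $(A,B)\in P$ or $(B,A)\in P$; robust if for every $(A,B)\in P$ and every separation $(C,D)$ of finite order, if $(B\cap C,A\cup D)$, $(B\cap D,A\cup C)$ both have order $<|A\cap B|$ then one of them is not in $P$. *)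

theory Defs
  imports Main "HOL-Library.Extended_Nat"
begin

definition graph :: "'a set \<Rightarrow> ('a \<Rightarrow> 'a \<Rightarrow> bool) \<Rightarrow> bool" where
  "graph V E \<longleftrightarrow> (\<forall>u v. E u v \<longrightarrow> u \<in> V \<and> v \<in> V \<and> u \<noteq> v \<and> E v u)"

type_synonym 'a sep = "'a set \<times> 'a set"

definition separation :: "'a set \<Rightarrow> ('a \<Rightarrow> 'a \<Rightarrow> bool) \<Rightarrow> 'a sep \<Rightarrow> bool" where
  "separation V E s \<longleftrightarrow> (case s of (A, B) \<Rightarrow>
     A \<union> B = V \<and> (\<forall>u v. u \<in> A - B \<longrightarrow> v \<in> B - A \<longrightarrow> \<not> E u v))"

definition sep_order :: "'a sep \<Rightarrow> enat" where
  "sep_order s = (case s of (A, B) \<Rightarrow>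
     (if finite (A \<inter> B) then enat (card (A \<inter> B)) else \<infinity>))"

definition sep_le :: "'a sep \<Rightarrow> 'a sep \<Rightarrow> bool" where
  "sep_le s t \<longleftrightarrow> fst s \<subseteq> fst t \<and> snd t \<subseteq> snd s"

definition flip :: "'a sep \<Rightarrow> 'a sep" where
  "flip s = (snd s, fst s)"

text \<open>\<open>G = G[A1] \<union> G[A2] \<union> G[A3]\<close>\<close>
definition covers3 :: "'a set \<Rightarrow> ('a \<Rightarrow> 'a \<Rightarrow> bool) \<Rightarrow> 'a set \<Rightarrow> 'a set \<Rightarrow> 'a set \<Rightarrow> bool" where
  "covers3 V E A1 A2 A3 \<longleftrightarrow>
     V = A1 \<union> A2 \<union> A3 \<and>
     (\<forall>u v. E u v \<longleftrightarrow> ((u \<in> A1 \<and> v \<in> A1 \<or> u \<in> A2 \<and> v \<in> A2 \<or> u \<in> A3 \<and> v \<in> A3) \<and> E u v))"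

definition component :: "'a set \<Rightarrow> ('a \<Rightarrow> 'a \<Rightarrow> bool) \<Rightarrow> 'a set \<Rightarrow> 'a set \<Rightarrow> bool" where
  "component V E X C \<longleftrightarrow> (\<exists>u \<in> V - X.
     C = {v. (\<lambda>x y. E x y \<and> x \<in> V - X \<and> y \<in> V - X)\<^sup>*\<^sup>* u v})"

definition principal_tangle :: "'a set \<Rightarrow> ('a \<Rightarrow> 'a \<Rightarrow> bool) \<Rightarrow> nat \<Rightarrow> 'a sep set \<Rightarrow> bool" where
  "principal_tangle V E k \<theta> \<longleftrightarrow>
     (\<forall>s \<in> \<theta>. separation V E s \<and> sep_order s < enat k) \<and>
     (\<forall>s1 \<in> \<theta>. \<forall>s2 \<in> \<theta>. \<forall>s3 \<in> \<theta>. \<not> covers3 V E (fst s1) (fst s2) (fst s3)) \<and>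
     (\<forall>X. X \<subseteq> V \<longrightarrow> finite X \<longrightarrow> card X < k \<longrightarrow>
        (\<exists>C. component V E X C \<and> (V - C, C \<union> X) \<in> \<theta>)) \<and>
     (\<forall>A B. separation V E (A, B) \<longrightarrow> sep_order (A, B) < enat k \<longrightarrow>
        (A, B) \<in> \<theta> \<or> (B, A) \<in> \<theta>)"

definition profile :: "'a set \<Rightarrow> ('a \<Rightarrow> 'a \<Rightarrow> bool) \<Rightarrow> 'a sep set \<Rightarrow> bool" where
  "profile V E P \<longleftrightarrow>
     (\<forall>s \<in> P. separation V E s) \<and>
     (\<forall>A B C D. sep_le (C, D) (A, B) \<longrightarrow> (A, B) \<in> P \<longrightarrow> (D, C) \<notin> P) \<and>
     (\<forall>A B C D. (A, B) \<in> P \<longrightarrow> (C, D) \<in> P \<longrightarrow> (B \<inter> D, A \<union> C) \<notin> P)"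

definition principal_profile :: "'a sep set \<Rightarrow> bool" where
  "principal_profile P \<longleftrightarrow>
     (\<forall>F. F \<subseteq> P \<longrightarrow> F \<noteq> {} \<longrightarrow>
        (\<forall>s \<in> F. \<forall>t \<in> F. fst s \<inter> snd s = fst t \<inter> snd t) \<longrightarrow>
        (\<Inter>s \<in> F. snd s - fst s) \<noteq> {})"

definition k_profile :: "'a set \<Rightarrow> ('a \<Rightarrow> 'a \<Rightarrow> bool) \<Rightarrow> nat \<Rightarrow> 'a sep set \<Rightarrow> bool" where
  "k_profile V E k P \<longleftrightarrow> profile V E P \<and>
     (\<forall>s \<in> P. sep_order s < enat k) \<and>
     (\<forall>A B. separation V E (A, B) \<longrightarrow> sep_order (A, B) < enat k \<longrightarrow>
        (A, B) \<in> P \<or> (B, A) \<in> P)"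

definition robust :: "'a set \<Rightarrow> ('a \<Rightarrow> 'a \<Rightarrow> bool) \<Rightarrow> 'a sep set \<Rightarrow> bool" where
  "robust V E P \<longleftrightarrow>
     (\<forall>A B C D. (A, B) \<in> P \<longrightarrow> separation V E (C, D) \<longrightarrow> sep_order (C, D) < \<infinity> \<longrightarrow>
        sep_order (B \<inter> C, A \<union> D) < sep_order (A, B) \<longrightarrow>
        sep_order (B \<inter> D, A \<union> C) < sep_order (A, B) \<longrightarrow>
        (B \<inter> C, A \<union> D) \<notin> P \<or> (B \<inter> D, A \<union> C) \<notin> P)"

end

theory Submission
  imports Defs
begin

lemma edge_sep:
  assumes "graph V E" "separation V E (A, B)" "E u v"
  shows "(u \<in> A \<and> v \<in> A) \<or> (u \<in> B \<and> v \<in> B)"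
proof -
  have g: "\<forall>u v. E u v \<longrightarrow> u \<in> V \<and> v \<in> V \<and> u \<noteq> v \<and> E v u"
    using assms(1) unfolding graph_def .
  have uv: "u \<in> V" "v \<in> V" "E v u" using g assms(3) by auto
  have s: "A \<union> B = V \<and> (\<forall>u v. u \<in> A - B \<longrightarrow> v \<in> B - A \<longrightarrow> \<not> E u v)"
    using assms(2) unfolding separation_def by simp
  show ?thesis
  proof (cases "u \<in> A")
    case True
    show ?thesis
    proof (cases "v \<in> A")
      case False
      hence "v \<in> B - A" using s uv by auto
      moreover have "u \<notin> B \<Longrightarrow> False" using s \<open>v \<in> B - A\<close> True assms(3) by auto
      ultimately show ?thesis using True by auto
    qed (simp add: True)
  next
    case False
    hence uB: "u \<in> B - A" using s uv by auto
    show ?thesis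
    proof (cases "v \<in> B")
      case False
      hence "v \<in> A - B" using s uv by auto
      hence False using s uB uv(3) by auto
      thus ?thesis ..
    qed (use uB in simp)
  qed
qed

lemma graph_edge:
  assumes "graph V E" "E u v"
  shows "u \<in> V" "v \<in> V" "E v u"
proof -
  have g: "\<forall>u v. E u v \<longrightarrow> u \<in> V \<and> v \<in> V \<and> u \<noteq> v \<and> E v u"
    using assms(1) unfolding graph_def .
  thus "u \<in> V" "v \<in> V" "E v u" using assms(2) by auto
qed

lemma tangle_comp:
  assumes "principal_tangle V E k \<theta>" "X \<subseteq> V" "finite X" "card X < k"
  shows "\<exists>C. component V E X C \<and> (V - C, C \<union> X) \<in> \<theta>"
proof -
  have "\<forall>X. X \<subseteq> V \<longrightarrow> finite X \<longrightarrow> card X < k \<longrightarrow>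
        (\<exists>C. component V E X C \<and> (V - C, C \<union> X) \<in> \<theta>)"
    using assms(1) unfolding principal_tangle_def by (elim conjE)
  thus ?thesis using assms(2-4) by simp
qed

lemma tangle_cov:
  assumes "principal_tangle V E k \<theta>" "s1 \<in> \<theta>" "s2 \<in> \<theta>" "s3 \<in> \<theta>"
  shows "\<not> covers3 V E (fst s1) (fst s2) (fst s3)"
proof -
  have "\<forall>s1 \<in> \<theta>. \<forall>s2 \<in> \<theta>. \<forall>s3 \<in> \<theta>. \<not> covers3 V E (fst s1) (fst s2) (fst s3)"
    using assms(1) unfolding principal_tangle_def by (elim conjE)
  thus ?thesis using assms(2-4) by simp
qed

lemma tangle_sep:
  assumes "principal_tangle V E k \<theta>" "s \<in> \<theta>"
  shows "separation V E s" "sep_order s < enat k"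
proof -
  have "\<forall>s \<in> \<theta>. separation V E s \<and> sep_order s < enat k"
    using assms(1) unfolding principal_tangle_def by (elim conjE)
  thus "separation V E s" "sep_order s < enat k" using assms(2) by simp_all
qed

lemma sepV: "separation V E (A, B) \<Longrightarrow> A \<union> B = V"
  unfolding separation_def by simp

lemma cov_intro:
  assumes "V = A1 \<union> A2 \<union> A3"
    and "\<And>u v. E u v \<Longrightarrow> (u \<in> A1 \<and> v \<in> A1 \<or> u \<in> A2 \<and> v \<in> A2 \<or> u \<in> A3 \<and> v \<in> A3)"
  shows "covers3 V E A1 A2 A3"
proof -
  have "\<forall>u v. E u v \<longleftrightarrow> ((u \<in> A1 \<and> v \<in> A1 \<or> u \<in> A2 \<and> v \<in> A2 \<or> u \<in> A3 \<and> v \<in> A3) \<and> E u v)"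
    using assms(2) by auto
  thus ?thesis unfolding covers3_def using assms(1) by simp
qed

lemma part_r:
  fixes V :: "'a set" and E :: "'a \<Rightarrow> 'a \<Rightarrow> bool" and k :: nat and \<theta> :: "'a sep set"
  assumes G: "graph V E"
    and T: "principal_tangle V E k \<theta>"
  shows "robust V E \<theta>"
  unfolding robust_def
proof (intro allI impI)
  fix A B C D
  assume ab: "(A, B) \<in> \<theta>" and cd: "separation V E (C, D)"
    and "sep_order (C, D) < \<infinity>" and "sep_order (B \<inter> C, A \<union> D) < sep_order (A, B)"
    and "sep_order (B \<inter> D, A \<union> C) < sep_order (A, B)"
  show "(B \<inter> C, A \<union> D) \<notin> \<theta> \<or> (B \<inter> D, A \<union> C) \<notin> \<theta>"
  proof (rule ccontr)
    assume "\<not> ?thesis"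
    hence h1: "(B \<inter> C, A \<union> D) \<in> \<theta>" and h2: "(B \<inter> D, A \<union> C) \<in> \<theta>" by auto
    have sab: "separation V E (A, B)" using tangle_sep[OF T ab] by simp
    have "covers3 V E (B \<inter> C) (B \<inter> D) A"
    proof (rule cov_intro)
      show "V = B \<inter> C \<union> B \<inter> D \<union> A" using sepV[OF sab] sepV[OF cd] by auto
      fix u v assume e: "E u v"
      have e1: "(u \<in> A \<and> v \<in> A) \<or> (u \<in> B \<and> v \<in> B)" using edge_sep[OF G sab e] .
      have e2: "(u \<in> C \<and> v \<in> C) \<or> (u \<in> D \<and> v \<in> D)" using edge_sep[OF G cd e] .
      show "u \<in> B \<inter> C \<and> v \<in> B \<inter> C \<or> u \<in> B \<inter> D \<and> v \<in> B \<inter> D \<or> u \<in> A \<and> v \<in> A"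
        using e1 e2 by blast
    qed
    thus False using tangle_cov[OF T h1 h2 ab] by simp
  qed
qed

lemma part_p:
  fixes V :: "'a set" and E :: "'a \<Rightarrow> 'a \<Rightarrow> bool" and k :: nat and \<theta> :: "'a sep set"
  assumes G: "graph V E"
    and T: "principal_tangle V E k \<theta>"
  shows "principal_profile \<theta>"
  unfolding principal_profile_def
proof (intro allI impI)
  fix F assume F: "F \<subseteq> \<theta>" "F \<noteq> {}" and eq: "\<forall>s\<in>F. \<forall>t\<in>F. fst s \<inter> snd s = fst t \<inter> snd t"
  obtain s0 where s0: "s0 \<in> F" using F by blast
  define X where "X = fst s0 \<inter> snd s0"
  have s0T: "s0 \<in> \<theta>" using F s0 by blast
  have s0s: "separation V E (fst s0, snd s0)" using tangle_sep(1)[OF T s0T] by simp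
  have s0o: "sep_order (fst s0, snd s0) < enat k" using tangle_sep(2)[OF T s0T] by simp
  have Xfin: "finite X" and Xc: "card X < k"
    using s0o unfolding X_def sep_order_def by (auto simp: case_prod_beta split: if_splits)
  have XV: "X \<subseteq> V" using sepV[OF s0s] unfolding X_def by blast
  obtain C where comp: "component V E X C" and CT: "(V - C, C \<union> X) \<in> \<theta>"
    using tangle_comp[OF T XV Xfin Xc] by blast
  have "\<exists>u \<in> V - X. C = {v. (\<lambda>x y. E x y \<and> x \<in> V - X \<and> y \<in> V - X)\<^sup>*\<^sup>* u v}"
    using comp unfolding component_def .
  then obtain u where u: "u \<in> V - X" and Cdef: "C = {v. (\<lambda>x y. E x y \<and> x \<in> V - X \<and> y \<in> V - X)\<^sup>*\<^sup>* u v}"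
    by (elim bexE)
  have uC: "u \<in> C" using Cdef by simp
  have CVX: "C \<subseteq> V - X"
  proof
    fix v assume "v \<in> C"
    hence "(\<lambda>x y. E x y \<and> x \<in> V - X \<and> y \<in> V - X)\<^sup>*\<^sup>* u v" using Cdef by simp
    thus "v \<in> V - X" using u by (induction rule: rtranclp_induct) auto
  qed
  have Cnb: "v \<in> C \<union> X" if "w \<in> C" "E w v" for w v
  proof -
    have "v \<in> V" using graph_edge[OF G that(2)] by simp
    show ?thesis
    proof (cases "v \<in> X")
      case False
      have r: "(\<lambda>x y. E x y \<and> x \<in> V - X \<and> y \<in> V - X)\<^sup>*\<^sup>* u w" using that(1) Cdef by simp
      have "w \<in> V - X" using CVX that(1) by blast
      hence "(\<lambda>x y. E x y \<and> x \<in> V - X \<and> y \<in> V - X) w v"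
        using that(2) False \<open>v \<in> V\<close> by simp
      hence "(\<lambda>x y. E x y \<and> x \<in> V - X \<and> y \<in> V - X)\<^sup>*\<^sup>* u v"
        by (rule rtranclp.rtrancl_into_rtrancl[OF r])
      thus ?thesis using Cdef by simp
    qed simp
  qed
  have "u \<in> snd s - fst s" if sF: "s \<in> F" for s
  proof -
    obtain A B where s: "s = (A, B)" by (cases s)
    have sT: "(A, B) \<in> \<theta>" using F sF s by blast
    have sab: "separation V E (A, B)" using tangle_sep(1)[OF T sT] .
    have "fst s \<inter> snd s = fst s0 \<inter> snd s0" using eq sF s0 by blast
    hence XAB: "A \<inter> B = X" unfolding X_def s by simp
    have AB: "A \<union> B = V" using sepV[OF sab] .
    show ?thesis
    proof (rule ccontr)
      assume "\<not> ?thesis"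
      hence "u \<notin> B - A" by (simp add: s)
      moreover have "u \<in> A \<union> B" "u \<notin> A \<inter> B" using u AB XAB by auto
      ultimately have uA: "u \<in> A - B" by blast
      have CA: "C \<subseteq> A - B"
      proof
        fix v assume "v \<in> C"
        hence "(\<lambda>x y. E x y \<and> x \<in> V - X \<and> y \<in> V - X)\<^sup>*\<^sup>* u v" using Cdef by simp
        thus "v \<in> A - B"
        proof (induction rule: rtranclp_induct)
          case base thus ?case using uA .
        next
          case (step y z)
          have ez: "E y z" "z \<notin> X" using step.hyps(2) by auto
          have "(y \<in> A \<and> z \<in> A) \<or> (y \<in> B \<and> z \<in> B)" using edge_sep[OF G sab ez(1)] .
          hence "z \<in> A" using step.IH by blast
          moreover have "z \<notin> B" using ez(2) XAB \<open>z \<in> A\<close> by auto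
          ultimately show ?case by simp
        qed
      qed
      have "covers3 V E (V - C) A A"
      proof (rule cov_intro)
        show "V = (V - C) \<union> A \<union> A" using CA AB by blast
        fix x y assume e: "E x y"
        have xyV: "x \<in> V" "y \<in> V" and ee: "E y x" using graph_edge[OF G e] by simp_all
        have XA: "X \<subseteq> A" "C \<subseteq> A" using XAB CA by auto
        show "x \<in> V - C \<and> y \<in> V - C \<or> x \<in> A \<and> y \<in> A \<or> x \<in> A \<and> y \<in> A"
        proof (cases "x \<in> C")
          case True
          hence "y \<in> C \<union> X" using Cnb[OF _ e] by simp
          thus ?thesis using True XA by blast
        next
          case xn: False
          show ?thesis
          proof (cases "y \<in> C")
            case True
            hence "x \<in> C \<union> X" using Cnb[OF _ ee] by simp
            thus ?thesis using True XA by blast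
          next
            case False
            thus ?thesis using xn xyV by blast
          qed
        qed
      qed
      thus False using tangle_cov[OF T CT sT sT] by simp
    qed
  qed
  hence "u \<in> (\<Inter>s\<in>F. snd s - fst s)" by simp
  thus "(\<Inter>s\<in>F. snd s - fst s) \<noteq> {}" by auto
qed

lemma part_k:
  fixes V :: "'a set" and E :: "'a \<Rightarrow> 'a \<Rightarrow> bool" and k :: nat and \<theta> :: "'a sep set"
  assumes G: "graph V E"
    and T: "principal_tangle V E k \<theta>"
  shows "k_profile V E k \<theta>"
  unfolding k_profile_def
proof (intro conjI)
  show "\<forall>s\<in>\<theta>. sep_order s < enat k" using tangle_sep(2)[OF T] by blast
  show "\<forall>A B. separation V E (A, B) \<longrightarrow> sep_order (A, B) < enat k \<longrightarrow> (A, B) \<in> \<theta> \<or> (B, A) \<in> \<theta>"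
    using T unfolding principal_tangle_def by blast
  show "profile V E \<theta>"
    unfolding profile_def
  proof (intro conjI allI impI)
    show "\<forall>s\<in>\<theta>. separation V E s" using tangle_sep(1)[OF T] by blast
  next
    fix A B C D
    assume le: "sep_le (C, D) (A, B)" and ab: "(A, B) \<in> \<theta>"
    show "(D, C) \<notin> \<theta>"
    proof
      assume dc: "(D, C) \<in> \<theta>"
      have sab: "separation V E (A, B)" using tangle_sep(1)[OF T ab] .
      have sdc: "separation V E (D, C)" using tangle_sep(1)[OF T dc] .
      have CA: "C \<subseteq> A" using le unfolding sep_le_def by simp
      have "covers3 V E A D D"
      proof (rule cov_intro)
        have "A \<union> B = V" "D \<union> C = V" using sepV[OF sab] sepV[OF sdc] by auto
        thus "V = A \<union> D \<union> D" using CA by blast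
        fix u v assume e: "E u v"
        have e1: "(u \<in> D \<and> v \<in> D) \<or> (u \<in> C \<and> v \<in> C)" using edge_sep[OF G sdc e] .
        thus "u \<in> A \<and> v \<in> A \<or> u \<in> D \<and> v \<in> D \<or> u \<in> D \<and> v \<in> D"
          using CA by blast
      qed
      thus False using tangle_cov[OF T ab dc dc] by simp
    qed
  next
    fix A B C D
    assume ab: "(A, B) \<in> \<theta>" and cd: "(C, D) \<in> \<theta>"
    show "(B \<inter> D, A \<union> C) \<notin> \<theta>"
    proof
      assume h: "(B \<inter> D, A \<union> C) \<in> \<theta>"
      have sab: "separation V E (A, B)" using tangle_sep(1)[OF T ab] .
      have scd: "separation V E (C, D)" using tangle_sep(1)[OF T cd] .
      have "covers3 V E A C (B \<inter> D)"
      proof (rule cov_intro)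
        have "A \<union> B = V" "C \<union> D = V" using sepV[OF sab] sepV[OF scd] by auto
        thus "V = A \<union> C \<union> B \<inter> D" by blast
        fix u v assume e: "E u v"
        have e1: "(u \<in> A \<and> v \<in> A) \<or> (u \<in> B \<and> v \<in> B)" using edge_sep[OF G sab e] .
        have e2: "(u \<in> C \<and> v \<in> C) \<or> (u \<in> D \<and> v \<in> D)" using edge_sep[OF G scd e] .
        show "u \<in> A \<and> v \<in> A \<or> u \<in> C \<and> v \<in> C \<or> u \<in> B \<inter> D \<and> v \<in> B \<inter> D"
          using e1 e2 by blast
      qed
      thus False using tangle_cov[OF T ab cd h] by simp
    qed
  qed
qed

theorem proposition6p5:
  fixes V :: "'a set" and E :: "'a \<Rightarrow> 'a \<Rightarrow> bool" and k :: nat and \<theta> :: "'a sep set"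
  assumes "graph V E"
    and "principal_tangle V E k \<theta>"
  shows "robust V E \<theta> \<and> principal_profile \<theta> \<and> k_profile V E k \<theta>"
  using part_r[OF assms] part_p[OF assms] part_k[OF assms] by blast

end
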